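(* Let $F\colon\mathsf{Set}\to\mathsf{Set}$ be a functor and $\Lambda^F$ a set of evaluation functions $F\mathcal{V}\to\mathcal{V}$. Define, for $d_X\colon X\times X\to\mathcal{V}$ and $s,t\in FX$, \[\overline{F}(d_X)(s,t)=\bigwedge_{\mathit{ev}\in\Lambda^F}\ \bigwedge_{f\in\gamma_X(d_X)} d_\mathcal{V}(\mathit{ev}(Ff(s)),\mathit{ev}(Ff(t))).\] Then $\overline{F}$ (acting as $F$ on maps) is a functor on the category $\mathcal{V}\text{-}\mathsf{Graph}$, i.e. whenever $f\colon X\to Y$ satisfies $d_X\sqsubseteq d_Y\circ(f\times f)$ then $\overline{F}(d_X)\sqsubseteq\overline{F}(d_Y)\circ(Ff\times Ff)$. Moreover, restricted to $\mathcal{V}$-categories it is fibred: $\overline{F}(d_Y\circ(f\times f))=\overline{F}(d_Y)\circ(Ff\times Ff)$ for every function $f\colon X\to Y$ and every $\mathcal{V}$-category $d_Y$ on $Y$.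
   Context: $\mathcal{V}$ is a quantale: a complete lattice $(\mathcal{V},\sqsubseteq)$ with a commutative monoid structure $(\mathcal{V},\otimes,k)$ such that $\otimes$ preserves arbitrary joins in each argument; $d_\mathcal{V}(a,-)$ denotes the right adjoint of $a\otimes -$ (residuation). Write $\bigwedge$ for meets in the order $\sqsubseteq$. $\mathcal{V}\text{-}\mathsf{Graph}$ has objects pairs $(X,d_X)$ with $d_X\colon X\times X\to\mathcal{V}$ and morphisms non-expansive maps $f$ ($d_X\sqsubseteq d_Y\circ(f\times f)$). A $\mathcal{V}$-category is such a $d$ with $k\sqsubseteq d(x,x)$ and $d(x,y)\otimes d(y,z)\sqsubseteq d(x,z)$. $\gamma_X(d_X)=\{f\colon X\to\mathcal{V}\mid d_X(x_1,x_2)\sqsubseteq d_\mathcal{V}(f(x_1),f(x_2))\text{ for all }x_1,x_2\}$. $\overline{F}$ is the (coalgebraic) Kantorovich lifting of $F$ w.r.t. $\Lambda^F$. *)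

theory Defs
  imports Main
begin

text \<open>A quantale structure on a complete lattice: a commutative monoid (tensor, k)
  whose tensor preserves arbitrary joins in each argument (by commutativity it
  suffices to require it in the second argument).\<close>
definition quantale :: "('v::complete_lattice \<Rightarrow> 'v \<Rightarrow> 'v) \<Rightarrow> 'v \<Rightarrow> bool" where
  "quantale tensor k \<longleftrightarrow>
     (\<forall>a b c. tensor (tensor a b) c = tensor a (tensor b c)) \<and>
     (\<forall>a b. tensor a b = tensor b a) \<and>
     (\<forall>a. tensor k a = a) \<and>
     (\<forall>a B. tensor a (Sup B) = Sup (tensor a ` B))"

definition dV :: "('v::complete_lattice \<Rightarrow> 'v \<Rightarrow> 'v) \<Rightarrow> 'v \<Rightarrow> 'v \<Rightarrow> 'v" where
  "dV tensor a b = Sup {c. tensor a c \<le> b}"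

definition nonexp :: "('x \<Rightarrow> 'x \<Rightarrow> 'v::complete_lattice) \<Rightarrow> ('y \<Rightarrow> 'y \<Rightarrow> 'v) \<Rightarrow> ('x \<Rightarrow> 'y) \<Rightarrow> bool" where
  "nonexp dX dY f \<longleftrightarrow> (\<forall>x1 x2. dX x1 x2 \<le> dY (f x1) (f x2))"

definition vcat :: "('v::complete_lattice \<Rightarrow> 'v \<Rightarrow> 'v) \<Rightarrow> 'v \<Rightarrow> ('x \<Rightarrow> 'x \<Rightarrow> 'v) \<Rightarrow> bool" where
  "vcat tensor k d \<longleftrightarrow> (\<forall>x. k \<le> d x x) \<and> (\<forall>x y z. tensor (d x y) (d y z) \<le> d x z)"

definition gammaV :: "('v::complete_lattice \<Rightarrow> 'v \<Rightarrow> 'v) \<Rightarrow> ('x \<Rightarrow> 'x \<Rightarrow> 'v) \<Rightarrow> ('x \<Rightarrow> 'v) set" where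
  "gammaV tensor d = {f. \<forall>x1 x2. d x1 x2 \<le> dV tensor (f x1) (f x2)}"

text \<open>Kantorovich lifting; Fm is the action of the functor F on maps X -> V,
  Lam the set of evaluation functions F V -> V.\<close>
definition kantorovich ::
  "('v::complete_lattice \<Rightarrow> 'v \<Rightarrow> 'v) \<Rightarrow> (('x \<Rightarrow> 'v) \<Rightarrow> 'fx \<Rightarrow> 'fv) \<Rightarrow> ('fv \<Rightarrow> 'v) set
    \<Rightarrow> ('x \<Rightarrow> 'x \<Rightarrow> 'v) \<Rightarrow> 'fx \<Rightarrow> 'fx \<Rightarrow> 'v" where
  "kantorovich tensor Fm Lam d s t =
     (INF ev\<in>Lam. INF f\<in>gammaV tensor d. dV tensor (ev (Fm f s)) (ev (Fm f t)))"

end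

theory Submission
  imports Defs
begin

lemma q_mono:
  assumes "quantale tensor k" "a \<le> b"
  shows "tensor c a \<le> tensor (c::'v::complete_lattice) b"
proof -
  have "tensor c (Sup {a,b}) = Sup (tensor c ` {a,b})"
    using assms(1) unfolding quantale_def by blast
  moreover have "Sup {a,b} = b" using assms(2) by (simp add: sup_absorb2)
  ultimately have "tensor c b = sup (tensor c a) (tensor c b)" by simp
  thus ?thesis by (metis sup.cobounded1)
qed

lemma q_mono2:
  assumes "quantale tensor k" "a \<le> b"
  shows "tensor a c \<le> tensor b (c::'v::complete_lattice)"
proof -
  have "\<And>x y. tensor x y = tensor y x" using assms(1) unfolding quantale_def by blast
  thus ?thesis using q_mono[OF assms] by metis
qed

lemma q_adj:
  assumes "quantale tensor k"
  shows "(tensor a c \<le> b) \<longleftrightarrow> (c \<le> dV tensor a (b::'v::complete_lattice))"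
proof
  assume "tensor a c \<le> b" thus "c \<le> dV tensor a b" unfolding dV_def by (simp add: Sup_upper)
next
  assume h: "c \<le> dV tensor a b"
  have "tensor a c \<le> tensor a (dV tensor a b)" using q_mono[OF assms h] .
  also have "\<dots> = Sup (tensor a ` {c. tensor a c \<le> b})"
    using assms unfolding quantale_def dV_def by blast
  also have "\<dots> \<le> b" by (auto intro: Sup_least)
  finally show "tensor a c \<le> b" .
qed

theorem mainTheorem10:
  fixes tensor :: "'v::complete_lattice \<Rightarrow> 'v \<Rightarrow> 'v" and k :: 'v
    and FXY :: "('x \<Rightarrow> 'y) \<Rightarrow> 'fx \<Rightarrow> 'fy"
    and FXV :: "('x \<Rightarrow> 'v) \<Rightarrow> 'fx \<Rightarrow> 'fv"
    and FYV :: "('y \<Rightarrow> 'v) \<Rightarrow> 'fy \<Rightarrow> 'fv"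
    and Lam :: "('fv \<Rightarrow> 'v) set"
  assumes "quantale tensor k"
    and F_comp: "\<And>(f :: 'x \<Rightarrow> 'y) (h :: 'y \<Rightarrow> 'v). FXV (h \<circ> f) = FYV h \<circ> FXY f"
  shows "(\<forall>(f :: 'x \<Rightarrow> 'y) dX dY. nonexp dX dY f \<longrightarrow>
            nonexp (kantorovich tensor FXV Lam dX) (kantorovich tensor FYV Lam dY) (FXY f))
       \<and> (\<forall>(f :: 'x \<Rightarrow> 'y) (dY :: 'y \<Rightarrow> 'y \<Rightarrow> 'v). vcat tensor k dY \<longrightarrow>
            kantorovich tensor FXV Lam (\<lambda>x1 x2. dY (f x1) (f x2))
              = (\<lambda>s t. kantorovich tensor FYV Lam dY (FXY f s) (FXY f t)))"
proof -
  note Q = assms(1)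
  have comm: "\<And>x y. tensor x y = tensor y x" using Q unfolding quantale_def by blast
  have assoc: "\<And>x y z. tensor (tensor x y) z = tensor x (tensor y z)" using Q unfolding quantale_def by blast
  have unit: "\<And>x. tensor k x = x" using Q unfolding quantale_def by blast
  have P1: "kantorovich tensor FXV Lam dX s t \<le> kantorovich tensor FYV Lam dY (FXY f s) (FXY f t)"
    if ne: "nonexp dX dY f" for f :: "'x \<Rightarrow> 'y" and dX dY s t
  proof -
    have "(INF g\<in>gammaV tensor dX. dV tensor (ev (FXV g s)) (ev (FXV g t)))
        \<le> (INF h\<in>gammaV tensor dY. dV tensor (ev (FYV h (FXY f s))) (ev (FYV h (FXY f t))))" for ev
    proof (rule INF_mono)
      fix h assume h: "h \<in> gammaV tensor dY"
      have "h \<circ> f \<in> gammaV tensor dX"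
        unfolding gammaV_def
      proof (safe)
        fix x1 x2
        have "dX x1 x2 \<le> dY (f x1) (f x2)" using ne unfolding nonexp_def by blast
        also have "\<dots> \<le> dV tensor (h (f x1)) (h (f x2))" using h unfolding gammaV_def by blast
        finally show "dX x1 x2 \<le> dV tensor ((h \<circ> f) x1) ((h \<circ> f) x2)" by simp
      qed
      moreover have "FXV (h \<circ> f) = FYV h \<circ> FXY f" by (rule F_comp)
      ultimately show "\<exists>g\<in>gammaV tensor dX. dV tensor (ev (FXV g s)) (ev (FXV g t))
          \<le> dV tensor (ev (FYV h (FXY f s))) (ev (FYV h (FXY f t)))"
        by (intro bexI[of _ "h \<circ> f"]) auto
    qed
    thus ?thesis unfolding kantorovich_def by (intro INF_mono) blast
  qed
  have P2: "kantorovich tensor FYV Lam dY (FXY f s) (FXY f t) \<le> kantorovich tensor FXV Lam (\<lambda>x1 x2. dY (f x1) (f x2)) s t"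
    if vc: "vcat tensor k dY" for f :: "'x \<Rightarrow> 'y" and dY s t
  proof -
    have refl: "\<And>y. k \<le> dY y y" and tr: "\<And>x y z. tensor (dY x y) (dY y z) \<le> dY x z"
      using vc unfolding vcat_def by auto
    have "(INF h\<in>gammaV tensor dY. dV tensor (ev (FYV h (FXY f s))) (ev (FYV h (FXY f t))))
        \<le> (INF g\<in>gammaV tensor (\<lambda>x1 x2. dY (f x1) (f x2)). dV tensor (ev (FXV g s)) (ev (FXV g t)))" for ev
    proof (rule INF_mono)
      fix g assume g: "g \<in> gammaV tensor (\<lambda>x1 x2. dY (f x1) (f x2))"
      hence g': "\<And>x1 x2. tensor (g x1) (dY (f x1) (f x2)) \<le> g x2"
        unfolding gammaV_def using q_adj[OF Q] by blast
      define h where "h y = Sup ((\<lambda>x. tensor (g x) (dY (f x) y)) ` UNIV)" for y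
      have hf: "h \<circ> f = g"
      proof
        fix x'
        have "h (f x') \<le> g x'" unfolding h_def using g' by (auto intro: Sup_least)
        moreover have "g x' \<le> h (f x')"
        proof -
          have "g x' = tensor (g x') k" using unit comm by metis
          also have "\<dots> \<le> tensor (g x') (dY (f x') (f x'))" by (rule q_mono[OF Q refl])
          also have "\<dots> \<le> h (f x')" unfolding h_def by (rule Sup_upper) auto
          finally show ?thesis .
        qed
        ultimately show "(h \<circ> f) x' = g x'" by auto
      qed
      have hg: "h \<in> gammaV tensor dY"
        unfolding gammaV_def
      proof (safe)
        fix y1 y2
        have "tensor (h y1) (dY y1 y2) = tensor (dY y1 y2) (h y1)" by (rule comm)
        also have "\<dots> = Sup (tensor (dY y1 y2) ` (\<lambda>x. tensor (g x) (dY (f x) y1)) ` UNIV)"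
          unfolding h_def using Q unfolding quantale_def by blast
        also have "\<dots> \<le> h y2" unfolding h_def
        proof (rule Sup_least, clarsimp)
          fix x
          have "tensor (dY y1 y2) (tensor (g x) (dY (f x) y1)) = tensor (g x) (tensor (dY (f x) y1) (dY y1 y2))"
            using comm assoc by metis
          also have "\<dots> \<le> tensor (g x) (dY (f x) y2)" by (rule q_mono[OF Q tr])
          also have "\<dots> \<le> Sup (range (\<lambda>x. tensor (g x) (dY (f x) y2)))" by (rule Sup_upper) auto
          finally show "tensor (dY y1 y2) (tensor (g x) (dY (f x) y1)) \<le> Sup (range (\<lambda>x. tensor (g x) (dY (f x) y2)))" .
        qed
        finally show "dY y1 y2 \<le> dV tensor (h y1) (h y2)" using q_adj[OF Q] by blast
      qed
      have "FXV g = FYV h \<circ> FXY f" using F_comp[of h f] hf by simp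
      thus "\<exists>h\<in>gammaV tensor dY. dV tensor (ev (FYV h (FXY f s))) (ev (FYV h (FXY f t)))
          \<le> dV tensor (ev (FXV g s)) (ev (FXV g t))"
        using hg by (intro bexI[of _ h]) auto
    qed
    thus ?thesis unfolding kantorovich_def by (intro INF_mono) blast
  qed
  have ne_id: "nonexp (\<lambda>x1 x2. dY (f x1) (f x2)) dY f" for dY and f :: "'x \<Rightarrow> 'y"
    unfolding nonexp_def by simp
  show ?thesis
  proof (intro conjI allI impI)
    fix f :: "'x \<Rightarrow> 'y" and dX :: "'x \<Rightarrow> 'x \<Rightarrow> 'v" and dY :: "'y \<Rightarrow> 'y \<Rightarrow> 'v"
    assume "nonexp dX dY f"
    thus "nonexp (kantorovich tensor FXV Lam dX) (kantorovich tensor FYV Lam dY) (FXY f)"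
      using P1 unfolding nonexp_def by blast
  next
    fix f :: "'x \<Rightarrow> 'y" and dY :: "'y \<Rightarrow> 'y \<Rightarrow> 'v"
    assume "vcat tensor k dY"
    thus "kantorovich tensor FXV Lam (\<lambda>x1 x2. dY (f x1) (f x2))
              = (\<lambda>s t. kantorovich tensor FYV Lam dY (FXY f s) (FXY f t))"
      using P1[OF ne_id] P2 by (intro ext antisym) blast+
  qed
qed

end
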